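(* Let $\alpha,\beta,m,u$ be positive integers with $\alpha=2^u\beta$, $\beta$ odd and $\gcd(\alpha,m)=1$. Let $G := C_m\rtimes C_\alpha$, where $C_m=\langle a\rangle$, $C_\alpha=\langle x\rangle$ and $x^{-1}ax=a^{-1}$. Then the number of cyclic subgroups of $G$ equals $d(|G|)+d(\beta)\,(m-d(m))$.
   Context: $C_k$ denotes the cyclic group of order $k$; $d(k)$ denotes the number of positive divisors of $k$. *)

theory Defs
  imports "HOL-Algebra.Algebra"
begin

definition num_divisors :: "nat \<Rightarrow> nat" where
  "num_divisors k = card {d. d dvd k \<and> d > 0}"

text \<open>The pair (i, j), with
  0 \<le> i < m and 0 \<le> j < alpha, represents the element a^i x^j, so that
  (a^i x^j)(a^k x^l) = a^(i + (-1)^j k) x^(j + l).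
  This is well defined only for even alpha (as in the statement, where alpha = 2^u beta, u \<ge> 1).\<close>
definition dihedral_sdp :: "nat \<Rightarrow> nat \<Rightarrow> (nat \<times> nat) monoid" where
  "dihedral_sdp m \<alpha> =
     \<lparr> carrier = {0..<m} \<times> {0..<\<alpha>},
       monoid.mult = (\<lambda>(i, j) (k, l).
                 ((i + (if even j then k else (m - k) mod m)) mod m, (j + l) mod \<alpha>)),
       one = (0, 0) \<rparr>"

definition cyclic_subgroups :: "('a, 'b) monoid_scheme \<Rightarrow> 'a set set" where
  "cyclic_subgroups G = {H. \<exists>g \<in> carrier G. H = generate G {g}}"

end

theory Submission
  imports Defs "HOL-Number_Theory.Cong"
begin


definition S :: "nat \<Rightarrow> int" where "S j = (if even j then 1 else -1)"

lemma key:
  assumes "x < m"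
  shows "int ((a + (if even j then x else (m - x) mod m)) mod m) = (int a + S j * int x) mod m"
proof (cases "even j")
  case True then show ?thesis by (simp add: S_def zmod_int)
next
  case False
  have "int ((a + (m - x) mod m) mod m) = (int a + int ((m - x) mod m)) mod m" by (simp add: zmod_int)
  also have "\<dots> = (int a + (int m - int x) mod m) mod m" using assms by (simp add: zmod_int of_nat_diff)
  also have "\<dots> = (int a + (int m - int x)) mod m" by (rule mod_add_right_eq)
  also have "\<dots> = ((int a - int x) + int m) mod m" by (simp add: algebra_simps)
  also have "\<dots> = (int a - int x) mod m" by (metis mod_add_self2)
  finally show ?thesis using False by (simp add: S_def)
qed

lemma S_mod: assumes "even \<alpha>" shows "S ((j + l) mod \<alpha>) = S j * S l"
proof -
  have "even ((j + l) mod \<alpha>) = even (j + l)" using assms by (simp add: dvd_mod_iff)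
  then show ?thesis by (auto simp: S_def)
qed

lemma group_sdp:
  assumes "m > 0" "\<alpha> > 0" "even \<alpha>"
  shows "group (dihedral_sdp m \<alpha>)"
proof (rule groupI)
  let ?G = "dihedral_sdp m \<alpha>"
  show "\<And>x y. x \<in> carrier ?G \<Longrightarrow> y \<in> carrier ?G \<Longrightarrow> x \<otimes>\<^bsub>?G\<^esub> y \<in> carrier ?G"
    using assms by (auto simp: dihedral_sdp_def)
  show "\<one>\<^bsub>?G\<^esub> \<in> carrier ?G" using assms by (auto simp: dihedral_sdp_def)
  show "\<And>x. x \<in> carrier ?G \<Longrightarrow> \<one>\<^bsub>?G\<^esub> \<otimes>\<^bsub>?G\<^esub> x = x"
    by (auto simp: dihedral_sdp_def)
  show "\<exists>y\<in>carrier ?G. y \<otimes>\<^bsub>?G\<^esub> x = \<one>\<^bsub>?G\<^esub>" if xin: "x \<in> carrier ?G" for x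
  proof -
    obtain i j where x: "x = (i, j)" "i < m" "j < \<alpha>" using xin by (cases x) (auto simp: dihedral_sdp_def)
    define l where "l = (\<alpha> - j) mod \<alpha>"
    define f where "f = (if even l then i else (m - i) mod m)"
    have "f < m" using x assms by (auto simp: f_def)
    define k where "k = (m - f) mod m"
    have "(k + f) mod m = 0"
      using \<open>f < m\<close> unfolding k_def
      by (metis add.commute le_add_diff_inverse less_imp_le mod_add_right_eq mod_self)
    moreover have "(l + j) mod \<alpha> = 0" unfolding l_def using x
      by (metis add.commute le_add_diff_inverse less_imp_le mod_add_left_eq mod_self)
    ultimately have "(k, l) \<otimes>\<^bsub>?G\<^esub> x = \<one>\<^bsub>?G\<^esub>"
      using x by (simp add: dihedral_sdp_def f_def)
    moreover have "(k, l) \<in> carrier ?G" using assms by (simp add: dihedral_sdp_def k_def l_def)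
    ultimately show ?thesis by blast
  qed
  show "x \<otimes>\<^bsub>?G\<^esub> y \<otimes>\<^bsub>?G\<^esub> z = x \<otimes>\<^bsub>?G\<^esub> (y \<otimes>\<^bsub>?G\<^esub> z)"
    if xin: "x \<in> carrier ?G" "y \<in> carrier ?G" "z \<in> carrier ?G" for x y z
  proof -
    obtain i j k l p q where xyz: "x = (i, j)" "y = (k, l)" "z = (p, q)" "i < m" "k < m" "p < m"
      using xin by (cases x; cases y; cases z) (auto simp: dihedral_sdp_def)
    define f where "f = (\<lambda>(j::nat) (k::nat). if even j then k else (m - k) mod m)"
    have K: "int ((c + f a b) mod m) = (int c + S a * int b) mod m" if "b < m" for a b c :: nat
      using key[OF that] unfolding f_def by simp
    have "int (((i + f j k) mod m + f ((j + l) mod \<alpha>) p) mod m)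
        = (int ((i + f j k) mod m) + S ((j + l) mod \<alpha>) * int p) mod m" using K xyz by simp
    also have "\<dots> = ((int i + S j * int k) mod m + S j * S l * int p) mod m"
      using K xyz S_mod[OF assms(3)] by simp
    also have "\<dots> = (int i + S j * int k + S j * S l * int p) mod m" by (simp add: mod_add_left_eq)
    finally have L: "int (((i + f j k) mod m + f ((j + l) mod \<alpha>) p) mod m) = (int i + S j * int k + S j * S l * int p) mod m" .
    have "int ((i + f j ((k + f l p) mod m)) mod m) = (int i + S j * int ((k + f l p) mod m)) mod m"
      using K assms by simp
    also have "\<dots> = (int i + S j * ((int k + S l * int p) mod m)) mod m" using K xyz by simp
    also have "\<dots> = (int i + S j * (int k + S l * int p)) mod m"
      by (metis mod_add_right_eq mod_mult_right_eq)
    also have "\<dots> = (int i + S j * int k + S j * S l * int p) mod m" by (simp add: algebra_simps)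
    finally have R: "int ((i + f j ((k + f l p) mod m)) mod m) = (int i + S j * int k + S j * S l * int p) mod m" .
    have 1: "((i + f j k) mod m + f ((j + l) mod \<alpha>) p) mod m = (i + f j ((k + f l p) mod m)) mod m"
      using L R by linarith
    have 2: "((j + l) mod \<alpha> + q) mod \<alpha> = (j + (l + q) mod \<alpha>) mod \<alpha>"
      by (simp add: mod_add_left_eq mod_add_right_eq add.assoc)
    show ?thesis using 1 2 xyz by (simp add: dihedral_sdp_def f_def)
  qed
qed


definition Dv :: "nat \<Rightarrow> nat set" where "Dv n = {d. d dvd n \<and> d > 0}"

lemma Dv_finite: "n > 0 \<Longrightarrow> finite (Dv n)"
  by (rule finite_subset[of _ "{..n}"]) (auto simp: Dv_def dvd_imp_le)

lemma l1: fixes x y a b :: nat shows "coprime a b \<Longrightarrow> y dvd b \<Longrightarrow> x dvd a \<Longrightarrow> gcd (x*y) a = x"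
  by (metis coprime_mult_right_iff dvd_mult_div_cancel
    gcd_mult_left_right_cancel gcd_nat.order_iff)
lemma Dv_mult:
  assumes "coprime a b" "a > 0" "b > 0"
  shows "card (Dv (a * b)) = card (Dv a) * card (Dv b)"
proof -
  have "bij_betw (\<lambda>(x, y). x * y) (Dv a \<times> Dv b) (Dv (a * b))"
  proof (rule bij_betwI')
    fix p q assume "p \<in> Dv a \<times> Dv b" "q \<in> Dv a \<times> Dv b"
    then obtain x y x' y' where p: "p = (x, y)" "q = (x', y')" "x dvd a" "y dvd b" "x' dvd a" "y' dvd b"
      by (auto simp: Dv_def)
    show "((\<lambda>(x, y). x * y) p = (\<lambda>(x, y). x * y) q) = (p = q)"
    proof
      assume h: "(\<lambda>(x, y). x * y) p = (\<lambda>(x, y). x * y) q"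
      have "x = x'" using l1[OF assms(1) p(4) p(3)] l1[OF assms(1) p(6) p(5)] h p by simp
      moreover have "y = y'" using l1[OF assms(1)[THEN coprime_commute[THEN iffD1]] p(3) p(4)]
          l1[OF assms(1)[THEN coprime_commute[THEN iffD1]] p(5) p(6)] h p by (simp add: mult.commute)
      ultimately show "p = q" using p by simp
    qed simp
  next
    fix p assume "p \<in> Dv a \<times> Dv b" then show "(\<lambda>(x, y). x * y) p \<in> Dv (a * b)"
      by (auto simp: Dv_def mult_dvd_mono)
  next
    fix d assume "d \<in> Dv (a * b)"
    then have "d dvd a * b" "d > 0" by (auto simp: Dv_def)
    then obtain x y where "d = x * y" "x dvd a" "y dvd b" by (metis dvd_productE)
    then show "\<exists>p\<in>Dv a \<times> Dv b. d = (\<lambda>(x, y). x * y) p" using \<open>d > 0\<close>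
      by (intro bexI[of _ "(x, y)"]) (auto simp: Dv_def)
  qed
  then show ?thesis by (metis bij_betw_same_card card_cartesian_product)
qed

lemma sdp_mult: "(i, j) \<otimes>\<^bsub>dihedral_sdp m \<alpha>\<^esub> (k, l) = ((i + (if even j then k else (m - k) mod m)) mod m, (j + l) mod \<alpha>)"
  by (simp add: dihedral_sdp_def)
lemma sdp_one: "\<one>\<^bsub>dihedral_sdp m \<alpha>\<^esub> = (0, 0)"
  by (simp add: dihedral_sdp_def)

lemma pow_even:
  assumes "even j" "even \<alpha>" "i < m"
  shows "(i, j) [^]\<^bsub>dihedral_sdp m \<alpha>\<^esub> (k::nat) = (k * i mod m, k * j mod \<alpha>)"
proof (induction k)
  case 0 then show ?case by (simp add: sdp_one)
next
  case (Suc k)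
  have "even (k * j mod \<alpha>)" using assms by (simp add: dvd_mod_iff)
  have s1: "(k * i mod m + i) mod m = Suc k * i mod m" by (metis mod_add_left_eq add.commute mult_Suc)
  have s2: "(k * j mod \<alpha> + j) mod \<alpha> = Suc k * j mod \<alpha>" by (metis mod_add_left_eq add.commute mult_Suc)
  have "(i, j) [^]\<^bsub>dihedral_sdp m \<alpha>\<^esub> Suc k = (k * i mod m, k * j mod \<alpha>) \<otimes>\<^bsub>dihedral_sdp m \<alpha>\<^esub> (i, j)"
    using Suc by simp
  also have "\<dots> = ((k * i mod m + i) mod m, (k * j mod \<alpha> + j) mod \<alpha>)"
    using \<open>even (k * j mod \<alpha>)\<close> unfolding sdp_mult by simp
  finally show ?case by (simp only: s1 s2)
qed

lemma pow_odd:
  assumes "odd j" "even \<alpha>" "i < m"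
  shows "(i, j) [^]\<^bsub>dihedral_sdp m \<alpha>\<^esub> (k::nat) = (if even k then 0 else i, k * j mod \<alpha>)"
proof (induction k)
  case 0 then show ?case by (simp add: sdp_one)
next
  case (Suc k)
  have "even (k * j mod \<alpha>) = even k" using assms by (simp add: dvd_mod_iff)
  have s2: "(k * j mod \<alpha> + j) mod \<alpha> = Suc k * j mod \<alpha>" by (metis mod_add_left_eq add.commute mult_Suc)
  have "(i, j) [^]\<^bsub>dihedral_sdp m \<alpha>\<^esub> Suc k = (if even k then 0 else i, k * j mod \<alpha>) \<otimes>\<^bsub>dihedral_sdp m \<alpha>\<^esub> (i, j)"
    using Suc by simp
  also have "\<dots> = (if even (Suc k) then 0 else i, Suc k * j mod \<alpha>)"
  proof (cases "even k")
    case True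
    have "(if even k then 0 else i, k * j mod \<alpha>) \<otimes>\<^bsub>dihedral_sdp m \<alpha>\<^esub> (i, j) = ((0 + i) mod m, (k * j mod \<alpha> + j) mod \<alpha>)"
      using True \<open>even (k * j mod \<alpha>) = even k\<close> unfolding sdp_mult by simp
    then show ?thesis using True assms by (simp only: s2) simp
  next
    case False
    have h: "(i + (m - i) mod m) mod m = 0"
      using assms by (cases "i = 0") auto
    have "(if even k then 0 else i, k * j mod \<alpha>) \<otimes>\<^bsub>dihedral_sdp m \<alpha>\<^esub> (i, j) = ((i + (m - i) mod m) mod m, (k * j mod \<alpha> + j) mod \<alpha>)"
      using False \<open>even (k * j mod \<alpha>) = even k\<close> unfolding sdp_mult by simp
    then show ?thesis using False by (simp only: s2 h) simp
  qed
  finally show ?case .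
qed



definition Eset :: "nat \<Rightarrow> nat \<Rightarrow> nat \<Rightarrow> nat \<Rightarrow> (nat \<times> nat) set" where
  "Eset m \<alpha> d e = {x. x < m \<and> d dvd x} \<times> {y. y < \<alpha> \<and> e dvd y}"

definition Oset :: "nat \<Rightarrow> nat \<Rightarrow> nat \<Rightarrow> nat \<Rightarrow> (nat \<times> nat) set" where
  "Oset m \<alpha> i c = {(0, t) | t. t < \<alpha> \<and> 2 * c dvd t} \<union> {(i, t) | t. t < \<alpha> \<and> c dvd t \<and> \<not> 2 * c dvd t}"

lemma genE:
  assumes "m > 0" "\<alpha> > 0" "even \<alpha>" "coprime m \<alpha>" "i < m" "j < \<alpha>" "even j"
  shows "{(i, j) [^]\<^bsub>dihedral_sdp m \<alpha>\<^esub> k | k. k \<in> (UNIV :: nat set)} = Eset m \<alpha> (gcd i m) (gcd j \<alpha>)"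
proof -
  have "{(i, j) [^]\<^bsub>dihedral_sdp m \<alpha>\<^esub> k | k. k \<in> (UNIV :: nat set)} = {(k * i mod m, k * j mod \<alpha>) | k. k \<in> (UNIV :: nat set)}"
    using pow_even[OF assms(7,3,5)] by simp
  also have "\<dots> = Eset m \<alpha> (gcd i m) (gcd j \<alpha>)"
  proof
    show "{(k * i mod m, k * j mod \<alpha>) | k. k \<in> (UNIV :: nat set)} \<subseteq> Eset m \<alpha> (gcd i m) (gcd j \<alpha>)"
      using assms by (auto simp: Eset_def dvd_mod)
    show "Eset m \<alpha> (gcd i m) (gcd j \<alpha>) \<subseteq> {(k * i mod m, k * j mod \<alpha>) | k. k \<in> (UNIV :: nat set)}"
    proof
      fix p assume "p \<in> Eset m \<alpha> (gcd i m) (gcd j \<alpha>)"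
      then obtain x y s t where p: "p = (x, y)" "x < m" "y < \<alpha>" "x = gcd i m * s" "y = gcd j \<alpha> * t"
        by (auto simp: Eset_def elim!: dvdE)
      obtain k1 where k1: "[i * k1 = gcd i m] (mod m)" using cong_solve_nat by blast
      obtain k2 where k2: "[j * k2 = gcd j \<alpha>] (mod \<alpha>)" using cong_solve_nat by blast
      obtain k where k: "[k = k1 * s] (mod m)" "[k = k2 * t] (mod \<alpha>)"
        using binary_chinese_remainder_nat[OF assms(4)] by blast
      have "[k * i = k1 * s * i] (mod m)" using k(1) by (simp add: cong_mult)
      moreover have "[k1 * s * i = gcd i m * s] (mod m)"
        using cong_mult[OF k1 cong_refl[of s]] by (simp add: ac_simps)
      ultimately have "[k * i = x] (mod m)" using p by (metis cong_trans)
      then have 1: "k * i mod m = x" using p by (simp add: cong_def)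
      have "[k * j = k2 * t * j] (mod \<alpha>)" using k(2) by (simp add: cong_mult)
      moreover have "[k2 * t * j = gcd j \<alpha> * t] (mod \<alpha>)"
        using cong_mult[OF k2 cong_refl[of t]] by (simp add: ac_simps)
      ultimately have "[k * j = y] (mod \<alpha>)" using p by (metis cong_trans)
      then have 2: "k * j mod \<alpha> = y" using p by (simp add: cong_def)
      show "p \<in> {(k * i mod m, k * j mod \<alpha>) | k. k \<in> (UNIV :: nat set)}"
        using 1 2 p by blast
    qed
  qed
  finally show ?thesis .
qed

lemma genO:
  assumes "\<alpha> > 0" "even \<alpha>" "i < m" "j < \<alpha>" "odd j"
  shows "{(i, j) [^]\<^bsub>dihedral_sdp m \<alpha>\<^esub> k | k. k \<in> (UNIV :: nat set)} = Oset m \<alpha> i (gcd j \<alpha>)"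
proof -
  define c where "c = gcd j \<alpha>"
  have oc: "odd c" using assms(5) unfolding c_def by (metis dvd_trans gcd_dvd1)
  have cp: "c > 0" using oc by (cases c) auto
  have "{(i, j) [^]\<^bsub>dihedral_sdp m \<alpha>\<^esub> k | k. k \<in> (UNIV :: nat set)} = {(if even k then 0 else i, k * j mod \<alpha>) | k. k \<in> (UNIV :: nat set)}"
    using pow_odd[OF assms(5,2,3)] by simp
  also have "\<dots> = Oset m \<alpha> i c"
  proof
    show "{(if even k then 0 else i, k * j mod \<alpha>) | k. k \<in> (UNIV :: nat set)} \<subseteq> Oset m \<alpha> i c"
    proof
      fix p assume "p \<in> {(if even k then 0 else i, k * j mod \<alpha>) | k. k \<in> (UNIV :: nat set)}"
      then obtain k where p: "p = (if even k then 0 else i, k * j mod \<alpha>)" by blast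
      have cd: "c dvd k * j mod \<alpha>" unfolding c_def by (simp add: dvd_mod)
      have par: "even (k * j mod \<alpha>) = even k" using assms by (simp add: dvd_mod_iff)
      have lt: "k * j mod \<alpha> < \<alpha>" using assms by simp
      show "p \<in> Oset m \<alpha> i c"
      proof (cases "even k")
        case True
        have "coprime 2 c" using oc by simp
        then have "2 * c dvd k * j mod \<alpha>" using cd par True by (simp add: divides_mult)
        then show ?thesis using p True lt by (auto simp: Oset_def)
      next
        case False
        have "\<not> 2 * c dvd k * j mod \<alpha>" using par False by (metis dvd_mult_left)
        then show ?thesis using p False lt cd by (auto simp: Oset_def)
      qed
    qed
    show "Oset m \<alpha> i c \<subseteq> {(if even k then 0 else i, k * j mod \<alpha>) | k. k \<in> (UNIV :: nat set)}"
    proof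
      fix p assume pO: "p \<in> Oset m \<alpha> i c"
      obtain k0 where k0: "[j * k0 = c] (mod \<alpha>)" using cong_solve_nat unfolding c_def by blast
      have "[j * k0 = c] (mod 2)" using k0 assms(2) by (rule cong_dvd_modulus_nat)
      then have "(j * k0) mod 2 = c mod 2" by (simp add: cong_def)
      then have "odd (j * k0)" using oc by (metis even_iff_mod_2_eq_zero)
      then have ok0: "odd k0" by simp
      show "p \<in> {(if even k then 0 else i, k * j mod \<alpha>) | k. k \<in> (UNIV :: nat set)}"
      proof (cases "p \<in> {(0, t) | t. t < \<alpha> \<and> 2 * c dvd t}")
        case True
        then obtain t s where t: "p = (0, t)" "t < \<alpha>" "t = 2 * c * s" by (auto elim!: dvdE)
        have "[k0 * (2 * s) * j = c * (2 * s)] (mod \<alpha>)"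
          using cong_mult[OF k0 cong_refl[of "2 * s"]] by (simp add: ac_simps)
        then have "k0 * (2 * s) * j mod \<alpha> = t" using t by (simp add: cong_def ac_simps)
        moreover have "even (k0 * (2 * s))" by simp
        ultimately show ?thesis using t by (intro CollectI exI[of _ "k0 * (2 * s)"]) auto
      next
        case False
        then obtain t s where t: "p = (i, t)" "t < \<alpha>" "t = c * s" "\<not> 2 * c dvd t"
          using pO by (auto simp: Oset_def elim!: dvdE)
        have os: "odd s" using t by auto
        have "[k0 * s * j = c * s] (mod \<alpha>)"
          using cong_mult[OF k0 cong_refl[of "s"]] by (simp add: ac_simps)
        then have "k0 * s * j mod \<alpha> = t" using t by (simp add: cong_def ac_simps)
        moreover have "odd (k0 * s)" using ok0 os by simp
        ultimately show ?thesis using t by (intro CollectI exI[of _ "k0 * s"]) auto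
      qed
    qed
  qed
  finally show ?thesis unfolding c_def .
qed



lemma fin_carrier: "finite (carrier (dihedral_sdp m \<alpha>))"
  by (simp add: dihedral_sdp_def)

lemma gen_eq:
  assumes "m > 0" "\<alpha> > 0" "even \<alpha>" "g \<in> carrier (dihedral_sdp m \<alpha>)"
  shows "generate (dihedral_sdp m \<alpha>) {g} = {g [^]\<^bsub>dihedral_sdp m \<alpha>\<^esub> k | k. k \<in> (UNIV :: nat set)}"
  using group.generate_pow_on_finite_carrier[OF group_sdp[OF assms(1-3)] fin_carrier assms(4)] .

lemma cyc_eq:
  assumes "m > 0" "\<alpha> > 0" "even \<alpha>" "coprime m \<alpha>"
  shows "cyclic_subgroups (dihedral_sdp m \<alpha>) =
    (\<lambda>(d, e). Eset m \<alpha> d e) ` (Dv m \<times> {e \<in> Dv \<alpha>. even e}) \<union>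
    (\<lambda>(i, c). Oset m \<alpha> i c) ` ({..<m} \<times> {c \<in> Dv \<alpha>. odd c})" (is "?L = ?A \<union> ?B")
proof
  show "?L \<subseteq> ?A \<union> ?B"
  proof
    fix H assume "H \<in> ?L"
    then obtain g where g: "g \<in> carrier (dihedral_sdp m \<alpha>)" "H = generate (dihedral_sdp m \<alpha>) {g}"
      by (auto simp: cyclic_subgroups_def)
    then obtain i j where ij: "g = (i, j)" "i < m" "j < \<alpha>" by (cases g) (auto simp: dihedral_sdp_def)
    have H: "H = {(i, j) [^]\<^bsub>dihedral_sdp m \<alpha>\<^esub> k | k. k \<in> (UNIV :: nat set)}"
      using gen_eq[OF assms(1-3) g(1)] g(2) ij by simp
    show "H \<in> ?A \<union> ?B"
    proof (cases "even j")
      case True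
      have "H = Eset m \<alpha> (gcd i m) (gcd j \<alpha>)" using H genE[OF assms ij(2,3) True] by simp
      moreover have "gcd i m \<in> Dv m" using assms by (simp add: Dv_def)
      moreover have "gcd j \<alpha> \<in> {e \<in> Dv \<alpha>. even e}" using assms True by (simp add: Dv_def)
      ultimately show ?thesis by blast
    next
      case False
      have "H = Oset m \<alpha> (i) (gcd j \<alpha>)" using H genO[OF assms(2,3) ij(2,3) False] by simp
      moreover have "gcd j \<alpha> \<in> {c \<in> Dv \<alpha>. odd c}" using assms False
        by (simp add: Dv_def)
      ultimately show ?thesis using ij by blast
    qed
  qed
  show "?A \<union> ?B \<subseteq> ?L"
  proof
    fix H assume "H \<in> ?A \<union> ?B"
    then show "H \<in> ?L"
    proof
      assume "H \<in> ?A"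
      then obtain d e where de: "H = Eset m \<alpha> d e" "d \<in> Dv m" "e \<in> Dv \<alpha>" "even e" by auto
      have g: "(d mod m, e mod \<alpha>) \<in> carrier (dihedral_sdp m \<alpha>)" using assms by (simp add: dihedral_sdp_def)
      have ev: "even (e mod \<alpha>)" using de assms by (simp add: dvd_mod_iff)
      have "gcd (d mod m) m = gcd d m" by (metis mod_mod_trivial gcd_red_nat)
      also have "\<dots> = d" using de by (simp add: Dv_def gcd_nat.absorb1)
      finally have "gcd (d mod m) m = d" .
      moreover have "gcd (e mod \<alpha>) \<alpha> = gcd e \<alpha>" by (metis mod_mod_trivial gcd_red_nat)
      moreover have "gcd e \<alpha> = e" using de by (simp add: Dv_def gcd_nat.absorb1)
      ultimately have "H = generate (dihedral_sdp m \<alpha>) {(d mod m, e mod \<alpha>)}"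
        using gen_eq[OF assms(1-3) g] genE[OF assms _ _ ev] de assms by simp
      then show ?thesis using g by (auto simp: cyclic_subgroups_def)
    next
      assume "H \<in> ?B"
      then obtain i c where ic: "H = Oset m \<alpha> i c" "i < m" "c \<in> Dv \<alpha>" "odd c" by auto
      have "c \<le> \<alpha>" using ic assms by (simp add: Dv_def dvd_imp_le)
      moreover have "c \<noteq> \<alpha>" using ic assms by auto
      ultimately have clt: "c < \<alpha>" by simp
      have g: "(i, c) \<in> carrier (dihedral_sdp m \<alpha>)" using ic clt by (simp add: dihedral_sdp_def)
      have "gcd c \<alpha> = c" using ic by (simp add: Dv_def gcd_nat.absorb1)
      then have "H = generate (dihedral_sdp m \<alpha>) {(i, c)}"
        using gen_eq[OF assms(1-3) g] genO[OF assms(2,3) ic(2) clt ic(4)] ic by simp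
      then show ?thesis using g by (auto simp: cyclic_subgroups_def)
    qed
  qed
qed

lemma divset_dvd:
  assumes "n > 0" "d \<in> Dv n" "d' \<in> Dv n" "{x. x < n \<and> d dvd x} = {x. x < (n::nat) \<and> d' dvd x}"
  shows "d' dvd d"
proof (cases "d < n")
  case True
  then have "d \<in> {x. x < n \<and> d dvd x}" by simp
  then have "d \<in> {x. x < n \<and> d' dvd x}" unfolding assms(4) .
  then show ?thesis by simp
next
  case False
  have "d \<le> n" using assms(1,2) by (auto simp: Dv_def dvd_imp_le)
  then have "d = n" using False by simp
  then show ?thesis using assms(3) by (simp add: Dv_def)
qed

lemma divset_inj:
  assumes "n > 0" "d \<in> Dv n" "d' \<in> Dv n" "{x. x < n \<and> d dvd x} = {x. x < (n::nat) \<and> d' dvd x}"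
  shows "d = d'"
  using divset_dvd[OF assms] divset_dvd[OF assms(1,3,2) assms(4)[symmetric]] by (simp add: dvd_antisym)

lemma card_cyc:
  assumes "m > 0" "\<alpha> > 0" "even \<alpha>" "coprime m \<alpha>"
  shows "card (cyclic_subgroups (dihedral_sdp m \<alpha>)) =
     card (Dv m) * card {e \<in> Dv \<alpha>. even e} + m * card {c \<in> Dv \<alpha>. odd c}"
proof -
  let ?Ev = "{e \<in> Dv \<alpha>. even e}" and ?Od = "{c \<in> Dv \<alpha>. odd c}"
  let ?A = "(\<lambda>(d, e). Eset m \<alpha> d e) ` (Dv m \<times> ?Ev)"
  let ?B = "(\<lambda>(i, c). Oset m \<alpha> i c) ` ({..<m} \<times> ?Od)"
  have fm: "finite (Dv m)" "finite (Dv \<alpha>)" using assms by (auto intro: Dv_finite)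
  have injA: "inj_on (\<lambda>(d, e). Eset m \<alpha> d e) (Dv m \<times> ?Ev)"
  proof (rule inj_onI)
    fix p q assume p: "p \<in> Dv m \<times> ?Ev" and q: "q \<in> Dv m \<times> ?Ev"
      and eq: "(\<lambda>(d, e). Eset m \<alpha> d e) p = (\<lambda>(d, e). Eset m \<alpha> d e) q"
    obtain d e d' e' where pq: "p = (d, e)" "q = (d', e')" by (cases p, cases q) auto
    have ne1: "{y. y < \<alpha> \<and> e dvd y} \<noteq> {}" "{y. y < \<alpha> \<and> e' dvd y} \<noteq> {}" using assms by auto
    have ne2: "{x. x < m \<and> d dvd x} \<noteq> {}" "{x. x < m \<and> d' dvd x} \<noteq> {}" using assms by auto
    have E: "Eset m \<alpha> d e = Eset m \<alpha> d' e'" using eq pq by simp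
    then have "fst ` Eset m \<alpha> d e = fst ` Eset m \<alpha> d' e'" "snd ` Eset m \<alpha> d e = snd ` Eset m \<alpha> d' e'" by simp_all
    then have "{x. x < m \<and> d dvd x} = {x. x < m \<and> d' dvd x}" "{y. y < \<alpha> \<and> e dvd y} = {y. y < \<alpha> \<and> e' dvd y}"
      using ne1 ne2 unfolding Eset_def by (simp_all only: fst_image_times snd_image_times if_False)
    then show "p = q" using divset_inj[OF assms(1)] divset_inj[OF assms(2)] p q pq by auto
  qed
  have cin: "(i, c) \<in> Oset m \<alpha> i c" if "c \<in> ?Od" for i c
  proof -
    have "c \<le> \<alpha>" using that assms by (simp add: Dv_def dvd_imp_le)
    moreover have "c \<noteq> \<alpha>" using that assms by auto
    moreover have "c > 0" using that by (cases c) auto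
    moreover have "\<not> 2 * c dvd c" using \<open>c > 0\<close> by auto
    ultimately show ?thesis by (auto simp: Oset_def)
  qed
  have injB: "inj_on (\<lambda>(i, c). Oset m \<alpha> i c) ({..<m} \<times> ?Od)"
  proof (rule inj_onI)
    fix p q assume p: "p \<in> {..<m} \<times> ?Od" and q: "q \<in> {..<m} \<times> ?Od"
      and eq: "(\<lambda>(i, c). Oset m \<alpha> i c) p = (\<lambda>(i, c). Oset m \<alpha> i c) q"
    obtain i c i' c' where pq: "p = (i, c)" "q = (i', c')" by (cases p, cases q) auto
    have O: "Oset m \<alpha> i c = Oset m \<alpha> i' c'" using eq pq by simp
    have oc: "odd c" "odd c'" using p q pq by auto
    have "(i, c) \<in> Oset m \<alpha> i' c'" using cin[of c i] p pq O by auto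
    then have 1: "i = i'" "c' dvd c" using oc by (auto simp: Oset_def)
    have "(i', c') \<in> Oset m \<alpha> i c" using cin[of c' i'] q pq O by auto
    then have 2: "c dvd c'" using oc by (auto simp: Oset_def)
    show "p = q" using 1 2 pq by (simp add: dvd_antisym)
  qed
  have nB: "HH \<notin> ?B" if "HH \<in> ?A" for HH
  proof
    assume "HH \<in> ?B"
    then obtain i c where ic: "HH = Oset m \<alpha> i c" "c \<in> ?Od" by auto
    obtain d e where de: "HH = Eset m \<alpha> d e" "even e" using \<open>HH \<in> ?A\<close> by auto
    have "(i, c) \<in> Eset m \<alpha> d e" using cin[OF ic(2)] ic(1) de(1) by simp
    then have "e dvd c" by (simp add: Eset_def)
    then show False using ic de by auto
  qed
  have disj: "?A \<inter> ?B = {}"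
  proof (rule equals0I)
    fix x assume x: "x \<in> ?A \<inter> ?B"
    from nB[OF IntD1[OF x]] IntD2[OF x] show False by (rule notE)
  qed
  have "card (?A \<union> ?B) = card ?A + card ?B"
    using disj fm by (intro card_Un_disjoint) auto
  also have "card ?A = card (Dv m) * card ?Ev"
    using card_image[OF injA] by (simp add: card_cartesian_product)
  also have "card ?B = m * card ?Od"
    using card_image[OF injB] by (simp add: card_cartesian_product)
  finally show ?thesis using cyc_eq[OF assms] by simp
qed



theorem proposition5p1:
  fixes \<alpha> \<beta> m u :: nat
  assumes "\<alpha> > 0" "\<beta> > 0" "m > 0" "u > 0"
    and "\<alpha> = 2 ^ u * \<beta>" and "odd \<beta>" and "coprime \<alpha> m"
  shows "int (card (cyclic_subgroups (dihedral_sdp m \<alpha>)))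
           = int (num_divisors (order (dihedral_sdp m \<alpha>)))
             + int (num_divisors \<beta>) * (int m - int (num_divisors m))"
proof -
  have ev: "even \<alpha>" using assms(4,5) by simp
  have cp: "coprime m \<alpha>" using assms(7) by (simp add: coprime_commute)
  have nd: "num_divisors n = card (Dv n)" for n by (simp add: num_divisors_def Dv_def)
  have Od: "{c \<in> Dv \<alpha>. odd c} = Dv \<beta>"
  proof
    show "{c \<in> Dv \<alpha>. odd c} \<subseteq> Dv \<beta>"
    proof
      fix c assume c: "c \<in> {c \<in> Dv \<alpha>. odd c}"
      then have "coprime c (2 ^ u)" by simp
      moreover have "c dvd 2 ^ u * \<beta>" using c assms(5) by (simp add: Dv_def)
      ultimately have "c dvd \<beta>" using coprime_dvd_mult_right_iff by blast
      then show "c \<in> Dv \<beta>" using c by (simp add: Dv_def)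
    qed
    show "Dv \<beta> \<subseteq> {c \<in> Dv \<alpha>. odd c}"
    proof
      fix c assume c: "c \<in> Dv \<beta>"
      then have cb: "c dvd \<beta>" "c > 0" by (auto simp: Dv_def)
      have "odd c" using cb(1) assms(6) dvd_trans by blast
      moreover have "c dvd \<alpha>" using cb(1) assms(5) by simp
      ultimately show "c \<in> {c \<in> Dv \<alpha>. odd c}" using cb by (simp add: Dv_def)
    qed
  qed
  have fa: "finite (Dv \<alpha>)" using assms by (simp add: Dv_finite)
  have "Dv \<alpha> = {e \<in> Dv \<alpha>. even e} \<union> {c \<in> Dv \<alpha>. odd c}" by auto
  then have da: "card (Dv \<alpha>) = card {e \<in> Dv \<alpha>. even e} + card {c \<in> Dv \<alpha>. odd c}"
    using fa by (metis (no_types, lifting) card_Un_disjoint disjoint_iff finite_Un mem_Collect_eq)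
  have ord: "order (dihedral_sdp m \<alpha>) = m * \<alpha>"
    by (simp add: order_def dihedral_sdp_def card_cartesian_product)
  have dm: "card (Dv (m * \<alpha>)) = card (Dv m) * card (Dv \<alpha>)" using Dv_mult[OF cp assms(3,1)] .
  have "card (cyclic_subgroups (dihedral_sdp m \<alpha>)) = card (Dv m) * card {e \<in> Dv \<alpha>. even e} + m * card (Dv \<beta>)"
    using card_cyc[OF assms(3,1) ev cp] Od by simp
  then show ?thesis unfolding nd ord dm da Od by (simp add: algebra_simps)
qed


end
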